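(* Let $p$ be an odd prime, $m\in\mathbb Z_p$ with $m\not\equiv0,\pm1\pmod p$. Then $$\sum_{k=0}^{[p/4]}\binom{4k}{2k}\Big(-\frac m{4(m-1)^2}\Big)^k\equiv\frac1{m+1}\Big(\frac{m-1}p\Big)\Big\{m\Big(\frac mp\Big)+\Big(\frac{-1}p\Big)\Big\}\pmod p$$ and $$\sum_{k=0}^{[p/4]}\binom{4k}{2k}\Big(-\frac{(m-1)^2}{64m}\Big)^k\equiv\begin{cases}\frac1{m+1}\big(m+\big(\frac mp\big)\big)m^{\frac{p-1}4}\pmod p&\text{if }4\mid p-1,\\ \frac1{m+1}\big(\big(\frac mp\big)+1\big)m^{\frac{p+1}4}\pmod p&\text{if }4\mid p-3.\end{cases}$$
   Context: $[x]$ is the greatest integer $\le x$; $\mathbb Z_p$ is the set of rational numbers whose denominator is not divisible by $p$; $(\frac{\cdot}{p})$ is the Legendre symbol. *)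

theory Defs
  imports Complex_Main "HOL-Number_Theory.Number_Theory"
begin

definition in_Zp :: "nat \<Rightarrow> rat \<Rightarrow> bool" where
  "in_Zp p x \<longleftrightarrow> \<not> (int p dvd snd (quotient_of x))"

definition ratcong_mod :: "nat \<Rightarrow> rat \<Rightarrow> rat \<Rightarrow> bool" where
  "ratcong_mod p x y \<longleftrightarrow> in_Zp p ((x - y) / of_nat p)"

text \<open>Legendre symbol of a rational a/b with p not dividing b:
  (a/p)(b/p) = (ab/p).\<close>
definition rLegendre :: "rat \<Rightarrow> nat \<Rightarrow> int" where
  "rLegendre x p = Legendre (fst (quotient_of x) * snd (quotient_of x)) (int p)"

end

theory Submission
  imports Defs
begin


definition zp :: "nat \<Rightarrow> rat \<Rightarrow> bool" where
  "zp p x \<longleftrightarrow> (\<exists>a b. \<not> int p dvd b \<and> x = of_int a / of_int b)"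

definition rc :: "nat \<Rightarrow> rat \<Rightarrow> rat \<Rightarrow> bool" where
  "rc p x y \<longleftrightarrow> zp p ((x - y) / of_nat p)"

lemma in_Zp_iff: assumes "prime p" shows "in_Zp p x \<longleftrightarrow> zp p x"
proof
  assume "in_Zp p x"
  then show "zp p x" unfolding in_Zp_def zp_def
    by (metis prod.collapse quotient_of_div)
next
  assume "zp p x"
  then obtain a b where nb: "\<not> int p dvd b" and x: "x = of_int a / of_int b" unfolding zp_def by blast
  obtain a' b' where q: "quotient_of x = (a', b')" by (cases "quotient_of x")
  have b0: "b \<noteq> 0" using nb by auto
  have b'0: "b' > 0" using quotient_of_denom_pos[OF q] .
  have cp: "coprime a' b'" using quotient_of_coprime[OF q] .
  have "of_int a / of_int b = (of_int a' / of_int b' :: rat)" using x quotient_of_div[OF q] by simp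
  then have "of_int (a * b') = (of_int (a' * b) :: rat)" using b0 b'0 by (simp add: field_simps)
  then have e: "a * b' = a' * b" by (simp only: of_int_eq_iff)
  then have "b' dvd a' * b" by (metis dvd_triv_right)
  then have "b' dvd b" using cp by (simp add: coprime_commute coprime_dvd_mult_right_iff)
  then have "\<not> int p dvd b'" using nb dvd_trans by blast
  then show "in_Zp p x" unfolding in_Zp_def q by simp
qed

lemma ratcong_iff: assumes "prime p" shows "ratcong_mod p x y \<longleftrightarrow> rc p x y"
  unfolding ratcong_mod_def rc_def using in_Zp_iff[OF assms] by simp

context fixes p :: nat assumes pr: "prime p"
begin

lemma p_pos: "p > 1" using pr prime_gt_1_nat by blast

lemma zp_int[simp]: "zp p (of_int a)"
  unfolding zp_def using p_pos by (intro exI[of _ a] exI[of _ 1]) auto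

lemma zp_nat[simp]: "zp p (of_nat a)" using zp_int[of "int a"] by simp
lemma zp_0[simp]: "zp p 0" using zp_int[of 0] by simp
lemma zp_1[simp]: "zp p 1" using zp_int[of 1] by simp
lemma zp_numeral[simp]: "zp p (numeral k)" using zp_int[of "numeral k"] by simp

lemma zp_add[simp]: "zp p x \<Longrightarrow> zp p y \<Longrightarrow> zp p (x + y)"
proof -
  assume "zp p x" "zp p y"
  then obtain a b c e where "\<not> int p dvd b" "x = of_int a / of_int b" "\<not> int p dvd e" "y = of_int c / of_int e"
    unfolding zp_def by blast
  moreover have "b \<noteq> 0" "e \<noteq> 0" using calculation by auto
  moreover have "\<not> int p dvd (b * e)" using calculation pr
    by (simp add: prime_dvd_mult_iff)
  ultimately show ?thesis unfolding zp_def
    by (intro exI[of _ "a * e + c * b"] exI[of _ "b * e"]) (simp add: field_simps)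
qed

lemma zp_mult[simp]: "zp p x \<Longrightarrow> zp p y \<Longrightarrow> zp p (x * y)"
proof -
  assume "zp p x" "zp p y"
  then obtain a b c e where "\<not> int p dvd b" "x = of_int a / of_int b" "\<not> int p dvd e" "y = of_int c / of_int e"
    unfolding zp_def by blast
  moreover have "b \<noteq> 0" "e \<noteq> 0" using calculation by auto
  moreover have "\<not> int p dvd (b * e)" using calculation pr
    by (simp add: prime_dvd_mult_iff)
  ultimately show ?thesis unfolding zp_def
    by (intro exI[of _ "a * c"] exI[of _ "b * e"]) (simp add: field_simps)
qed

lemma zp_uminus[simp]: "zp p x \<Longrightarrow> zp p (- x)"
  using zp_mult[of "-1" x] zp_int[of "-1"] by simp

lemma zp_diff[simp]: "zp p x \<Longrightarrow> zp p y \<Longrightarrow> zp p (x - y)"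
  using zp_add[of x "-y"] by simp

lemma zp_pow[simp]: "zp p x \<Longrightarrow> zp p (x ^ k)"
  by (induction k) auto

lemma zp_sum: "(\<And>i. i \<in> A \<Longrightarrow> zp p (f i)) \<Longrightarrow> zp p (sum f A)"
  by (induction A rule: infinite_finite_induct) auto

lemma zp_inv: assumes "zp p x" "\<not> rc p x 0" shows "zp p (1 / x)"
proof -
  obtain a b where nb: "\<not> int p dvd b" and x: "x = of_int a / of_int b" using assms(1) unfolding zp_def by blast
  have "\<not> int p dvd a"
  proof
    assume "int p dvd a"
    then obtain c where "a = int p * c" by blast
    then have "(x - 0) / of_nat p = of_int c / of_int b" using x p_pos by simp
    then show False using assms(2) nb unfolding rc_def zp_def by blast
  qed
  then show ?thesis unfolding zp_def using x by (intro exI[of _ b] exI[of _ a]) simp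
qed

lemma rc_refl[simp]: "rc p x x" unfolding rc_def by simp
lemma rc_sym: "rc p x y \<Longrightarrow> rc p y x"
  unfolding rc_def using zp_uminus[of "(x - y) / of_nat p"] by (simp add: minus_divide_left)
lemma rc_trans: "rc p x y \<Longrightarrow> rc p y z \<Longrightarrow> rc p x z"
  unfolding rc_def using zp_add[of "(x - y) / of_nat p" "(y - z) / of_nat p"] by (simp add: add_divide_distrib[symmetric])
lemma rc_add: "rc p x x' \<Longrightarrow> rc p y y' \<Longrightarrow> rc p (x + y) (x' + y')"
  unfolding rc_def using zp_add[of "(x - x') / of_nat p" "(y - y') / of_nat p"] by (simp add: add_divide_distrib[symmetric] algebra_simps)
lemma rc_uminus: "rc p x x' \<Longrightarrow> rc p (- x) (- x')"
  unfolding rc_def using zp_uminus[of "(x - x') / of_nat p"] by (simp add: minus_divide_left)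
lemma rc_diff: "rc p x x' \<Longrightarrow> rc p y y' \<Longrightarrow> rc p (x - y) (x' - y')"
  using rc_add[of x x' "-y" "-y'"] rc_uminus by simp

lemma zp_rc: "rc p x y \<Longrightarrow> zp p y \<Longrightarrow> zp p x"
proof -
  assume "rc p x y" "zp p y"
  then have "zp p (of_nat p * ((x - y) / of_nat p) + y)" unfolding rc_def
    by (intro zp_add zp_mult zp_nat) auto
  moreover have "of_nat p * ((x - y) / of_nat p) + y = x" using p_pos by simp
  ultimately show ?thesis by simp
qed

lemma rc_mult: assumes "rc p x x'" "rc p y y'" "zp p x'" "zp p y'"
  shows "rc p (x * y) (x' * y')"
proof -
  have "zp p x" using zp_rc assms by blast
  have "(x * y - x' * y') / of_nat p = x * ((y - y') / of_nat p) + ((x - x') / of_nat p) * y'"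
    using p_pos by (simp add: field_simps)
  moreover have "zp p ((x - x') / of_nat p)" "zp p ((y - y') / of_nat p)" using assms unfolding rc_def by auto
  ultimately show ?thesis unfolding rc_def using assms \<open>zp p x\<close> by (simp only:) (intro zp_add zp_mult; simp)
qed

lemma rc_multl: "rc p y y' \<Longrightarrow> zp p x \<Longrightarrow> zp p y' \<Longrightarrow> rc p (x * y) (x * y')"
  using rc_mult[of x x y y'] by simp

lemma rc_pow: "rc p x x' \<Longrightarrow> zp p x' \<Longrightarrow> rc p (x ^ k) (x' ^ k)"
  by (induction k) (auto intro: rc_mult)

lemma rc_sum: "(\<And>i. i \<in> A \<Longrightarrow> rc p (f i) (g i)) \<Longrightarrow> rc p (sum f A) (sum g A)"
  by (induction A rule: infinite_finite_induct) (auto intro: rc_add)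

lemma rc_int: "[a = b] (mod int p) \<Longrightarrow> rc p (of_int a) (of_int b)"
proof -
  assume "[a = b] (mod int p)"
  then obtain k where "a - b = int p * k" by (metis cong_iff_dvd_diff cong_sym dvdE)
  then have "(of_int a - of_int b) / of_nat p = (of_int k :: rat)" using p_pos
    by (metis (no_types, lifting) diff_divide_distrib nonzero_mult_div_cancel_left of_int_diff of_int_mult of_int_of_nat_eq of_nat_0_eq_iff zero_less_one_class.zero_le_one not_one_le_zero p_pos less_imp_le)
  then show ?thesis unfolding rc_def by simp
qed

lemma rc_div: assumes "rc p (a * c) b" "zp p a" "zp p b" "zp p c" "\<not> rc p c 0"
  shows "rc p a (b / c)"
proof -
  have ci: "zp p (1 / c)" using zp_inv assms by blast
  have "c \<noteq> 0" using assms(5) by auto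
  have "rc p (a * c * (1 / c)) (b * (1 / c))" by (rule rc_mult[OF assms(1) rc_refl]) (use ci assms in auto)
  moreover have "a * c * (1 / c) = a" "b * (1 / c) = b / c" using \<open>c \<noteq> 0\<close> by auto
  ultimately show ?thesis by simp
qed

lemma rc_one_inv: assumes "rc p u 1" "zp p u" shows "rc p (1 / u) 1"
proof -
  have "\<not> rc p u 0"
  proof
    assume "rc p u 0"
    then have "rc p 1 0" using rc_trans rc_sym assms(1) by blast
    then have "zp p (1 / of_nat p)" unfolding rc_def by simp
    then obtain a b where nb: "\<not> int p dvd b" and e: "1 / of_nat p = (of_int a / of_int b :: rat)" unfolding zp_def by blast
    have "b \<noteq> 0" using nb by auto
    then have "of_int b = (of_int (int p * a) :: rat)" using e p_pos by (simp add: field_simps)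
    then have "b = int p * a" by (simp only: of_int_eq_iff)
    then show False using nb by simp
  qed
  have "rc p (1 * u) 1" using assms by simp
  from rc_div[OF this] show ?thesis using assms \<open>\<not> rc p u 0\<close> by (simp add: rc_sym)
qed


lemma int_fermat: assumes "2 < p" "\<not> int p dvd a" shows "[a ^ (p - 1) = 1] (mod int p)"
proof -
  have e: "[Legendre a (int p) = a ^ ((p - 1) div 2)] (mod int p)" using euler_criterion[OF pr assms(1)] .
  have "\<not> [a = 0] (mod int p)" using assms(2) by (simp add: cong_0_iff)
  then have L: "Legendre a (int p) * Legendre a (int p) = 1" unfolding Legendre_def by auto
  have "odd p" using pr assms(1) prime_odd_nat by blast
  then have "p - 1 = 2 * ((p - 1) div 2)" by presburger
  then have "a ^ (p - 1) = a ^ ((p - 1) div 2) * a ^ ((p - 1) div 2)" by (metis mult_2 power_add)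
  moreover have "[a ^ ((p - 1) div 2) * a ^ ((p - 1) div 2) = Legendre a (int p) * Legendre a (int p)] (mod int p)"
    using e by (intro cong_mult) (auto simp: cong_sym)
  ultimately show ?thesis using L by simp
qed

lemma zp_quot: assumes "zp p x" obtains a b where "quotient_of x = (a, b)" "x = of_int a / of_int b" "b > 0" "\<not> int p dvd b"
proof -
  obtain a b where q: "quotient_of x = (a, b)" by (cases "quotient_of x")
  moreover have "\<not> int p dvd b" using assms in_Zp_iff[OF pr, of x] q unfolding in_Zp_def by simp
  ultimately show ?thesis using that quotient_of_div quotient_of_denom_pos by blast
qed

lemma nz_num: assumes "x = of_int a / of_int b" "\<not> int p dvd b" "\<not> rc p x 0" shows "\<not> int p dvd a"
proof
  assume "int p dvd a"
  then obtain c where "a = int p * c" by blast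
  then have "(x - 0) / of_nat p = of_int c / of_int b" using assms p_pos by simp
  then show False using assms(2,3) unfolding rc_def zp_def by blast
qed

lemma pr_int: "prime (int p)" using pr by simp

lemma zp_inv_int: "\<not> int p dvd b \<Longrightarrow> zp p (1 / of_int b)"
  unfolding zp_def by (intro exI[of _ 1] exI[of _ b]) simp

lemma nz_int: assumes "\<not> int p dvd b" shows "\<not> rc p (of_int b) 0"
proof
  assume "rc p (of_int b) 0"
  then obtain c e where ne: "\<not> int p dvd e" and eq: "of_int b / of_nat p = (of_int c / of_int e :: rat)"
    unfolding rc_def zp_def by auto
  have "e \<noteq> 0" using ne by auto
  then have "of_int (b * e) = (of_int (int p * c) :: rat)" using eq p_pos by (simp add: field_simps)
  then have "b * e = int p * c" by (simp only: of_int_eq_iff)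
  then have "int p dvd b * e" by simp
  then show False using assms ne pr_int by (simp add: prime_dvd_mult_iff)
qed

lemma rc_fermat: assumes "2 < p" "zp p x" "\<not> rc p x 0" shows "rc p (x ^ (p - 1)) 1"
proof -
  obtain a b where q: "x = of_int a / of_int b" "b > 0" "\<not> int p dvd b" using zp_quot[OF assms(2)] by blast
  have na: "\<not> int p dvd a" using nz_num q assms by blast
  have "rc p (of_int (a ^ (p - 1))) 1" using rc_int[OF int_fermat[OF assms(1) na]] by simp
  moreover have "rc p 1 (of_int (b ^ (p - 1)))" using rc_int[OF int_fermat[OF assms(1) q(3)]] by (simp add: rc_sym)
  ultimately have "rc p (of_int (a ^ (p - 1))) (of_int (b ^ (p - 1)))" using rc_trans by blast
  then have "rc p (of_int (a ^ (p - 1)) * (1 / of_int (b ^ (p - 1)))) (of_int (b ^ (p - 1)) * (1 / of_int (b ^ (p - 1))))"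
  proof (rule rc_mult)
    have "\<not> int p dvd b ^ (p - 1)" using pr_int prime_dvd_power q(3) by blast
    then show "zp p (1 / rat_of_int (b ^ (p - 1)))" using zp_inv_int by blast
  qed simp_all
  then show ?thesis using q(1,2) by (simp add: power_divide)
qed

lemma rc_euler: assumes "2 < p" "zp p x" "\<not> rc p x 0" shows "rc p (of_int (rLegendre x p)) (x ^ ((p - 1) div 2))"
proof -
  obtain a b where q: "quotient_of x = (a, b)" "x = of_int a / of_int b" "b > 0" "\<not> int p dvd b" using zp_quot[OF assms(2)] by blast
  have "odd p" using pr assms(1) prime_odd_nat by blast
  then have pn: "p - 1 = 2 * ((p - 1) div 2)" by presburger
  define n where "n = (p - 1) div 2"
  have "rc p (of_int (rLegendre x p)) (of_int ((a * b) ^ n))"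
    unfolding rLegendre_def q(1) n_def using rc_int[OF euler_criterion[OF pr assms(1), of "a * b"]] by simp
  moreover have "of_int ((a * b) ^ n) = x ^ n * (of_int b) ^ (p - 1)"
  proof -
    have "of_int a = x * of_int b" using q(2,3) by simp
    then have "of_int ((a * b) ^ n) = (x * of_int b * of_int b) ^ n" by simp
    also have "\<dots> = x ^ n * (of_int b) ^ (2 * n)" by (simp add: power_mult_distrib power_mult power2_eq_square)
    finally show ?thesis using pn n_def by simp
  qed
  moreover have "rc p (x ^ n * (of_int b) ^ (p - 1)) (x ^ n * 1)"
  proof (rule rc_multl)
    have "\<not> rc p (of_int b) 0" using nz_int q(4) by blast
    then show "rc p (rat_of_int b ^ (p - 1)) 1" using rc_fermat assms by simp
  qed (use assms in auto)
  ultimately show ?thesis using rc_trans n_def by auto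
qed

end



definition mul :: "rat \<Rightarrow> rat \<times> rat \<Rightarrow> rat \<times> rat \<Rightarrow> rat \<times> rat" where
  "mul d z w = (fst z * fst w + d * snd z * snd w, fst z * snd w + snd z * fst w)"

fun pw :: "rat \<Rightarrow> rat \<times> rat \<Rightarrow> nat \<Rightarrow> rat \<times> rat" where
  "pw d z 0 = (1, 0)"
| "pw d z (Suc N) = mul d (pw d z N) z"

lemma mul_comm: "mul d z w = mul d w z" unfolding mul_def by (simp add: algebra_simps)
lemma mul_assoc: "mul d (mul d z w) u = mul d z (mul d w u)" unfolding mul_def by (simp add: algebra_simps)
lemma mul_one[simp]: "mul d z (1, 0) = z" "mul d (1, 0) z = z" unfolding mul_def by auto

lemma pw_add: "pw d z (N + M) = mul d (pw d z N) (pw d z M)"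
  by (induction M) (auto simp: mul_assoc)

lemma pw_mul: "pw d (mul d z w) N = mul d (pw d z N) (pw d w N)"
proof (induction N)
  case (Suc N)
  then show ?case by (simp add: mul_assoc) (metis mul_assoc mul_comm)
qed simp

lemma pw_pw: "pw d (pw d z a) b = pw d z (a * b)"
  by (induction b) (auto simp: pw_add[symmetric] add.commute)

lemma pw_scale: "pw d (c * a, c * b) N = (c ^ N * fst (pw d (a, b) N), c ^ N * snd (pw d (a, b) N))"
  by (induction N) (auto simp: mul_def algebra_simps)

lemma pw_conj: "pw d (a, - b) N = (fst (pw d (a, b) N), - snd (pw d (a, b) N))"
  by (induction N) (auto simp: mul_def algebra_simps)

lemma pw_real: "pw d (a, 0) N = (a ^ N, 0)"
  by (induction N) (auto simp: mul_def algebra_simps)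

lemma pascal_sum:
  fixes f :: "nat \<Rightarrow> rat"
  shows "(\<Sum>i\<le>Suc N. of_nat (Suc N choose i) * f i) = (\<Sum>i\<le>N. of_nat (N choose i) * f i) + (\<Sum>i\<le>N. of_nat (N choose i) * f (Suc i))"
proof -
  have "(\<Sum>i\<le>Suc N. of_nat (Suc N choose i) * f i) = f 0 + (\<Sum>i\<le>N. of_nat (Suc N choose Suc i) * f (Suc i))"
    by (simp only: sum.atMost_Suc_shift) simp
  also have "\<dots> = f 0 + (\<Sum>i\<le>N. of_nat (N choose Suc i) * f (Suc i)) + (\<Sum>i\<le>N. of_nat (N choose i) * f (Suc i))"
    by (simp add: sum.distrib algebra_simps)
  also have "f 0 + (\<Sum>i\<le>N. of_nat (N choose Suc i) * f (Suc i)) = (\<Sum>i\<le>N. of_nat (N choose i) * f i)"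
  proof -
    have "(\<Sum>i\<le>Suc N. of_nat (N choose i) * f i) = f 0 + (\<Sum>i\<le>N. of_nat (N choose Suc i) * f (Suc i))"
      by (simp only: sum.atMost_Suc_shift) simp
    then show ?thesis by (simp add: binomial_eq_0)
  qed
  finally show ?thesis .
qed

definition fe :: "rat \<Rightarrow> rat \<Rightarrow> nat \<Rightarrow> rat" where
  "fe d t i = (if even i then t ^ i * d ^ (i div 2) else 0)"
definition fo :: "rat \<Rightarrow> rat \<Rightarrow> nat \<Rightarrow> rat" where
  "fo d t i = (if odd i then t ^ i * d ^ (i div 2) else 0)"

lemma fe_Suc: "fe d t (Suc i) = d * t * fo d t i"
  unfolding fe_def fo_def by (auto elim!: oddE simp: algebra_simps)
lemma fo_Suc: "fo d t (Suc i) = t * fe d t i"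
  unfolding fe_def fo_def by (auto elim!: evenE simp: algebra_simps)

lemma pw_formula: "pw d (1, t) N = ((\<Sum>i\<le>N. of_nat (N choose i) * fe d t i), (\<Sum>i\<le>N. of_nat (N choose i) * fo d t i))"
proof (induction N)
  case 0
  then show ?case by (simp add: fe_def fo_def)
next
  case (Suc N)
  show ?case
    apply (simp only: pw.simps Suc pascal_sum fe_Suc fo_Suc)
    apply (simp add: mul_def sum_distrib_left algebra_simps)
    done
qed

lemma even_reindex: "(\<Sum>i\<le>(N::nat). if even i then h (i div 2) else (0::rat)) = (\<Sum>k\<le>N div 2. h k)"
proof (induction N)
  case (Suc N)
  show ?case
  proof (cases "even N")
    case True
    then have "Suc N div 2 = N div 2" by presburger
    then show ?thesis using Suc True by simp
  next
    case False
    then have "Suc N div 2 = Suc (N div 2)" by presburger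
    then show ?thesis using Suc False by simp
  qed
qed simp

lemma pw_fst: "fst (pw d (1, t) N) = (\<Sum>k\<le>N div 2. of_nat (N choose (2 * k)) * (t ^ 2 * d) ^ k)"
proof -
  have "fst (pw d (1, t) N) = (\<Sum>i\<le>N. if even i then of_nat (N choose (2 * (i div 2))) * (t ^ 2 * d) ^ (i div 2) else 0)"
    unfolding pw_formula fst_conv
    by (intro sum.cong refl) (auto simp: fe_def power_mult_distrib power_mult[symmetric] elim!: evenE)
  then show ?thesis using even_reindex by simp
qed




lemma c1: "Suc j * (2 * Suc j choose Suc j) = 2 * (2 * j + 1) * (2 * j choose j)"
  by (metis Suc_eq_plus1 Suc_times_binomial Suc_times_binomial_add
    add_Suc_right add_Suc_shift mult.assoc mult_2)
lemma c2: "Suc j * (n choose Suc j) = (n - j) * (n choose j)"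
  by (metis binomial_absorption binomial_absorb_comp)

context fixes p :: nat assumes pr: "prime p" and odd: "odd p"
begin

lemma central_cong: assumes "j \<le> (p - 1) div 2"
  shows "[int (2 * j choose j) = int ((p - 1) div 2 choose j) * (-4) ^ j] (mod int p)"
  using assms
proof (induction j)
  case 0
  then show ?case by simp
next
  case (Suc j)
  define n where "n = (p - 1) div 2"
  have p2: "p = 2 * n + 1" using odd n_def by presburger
  have jn: "j < n" using Suc.prems n_def by simp
  have IH: "[int (2 * j choose j) = int (n choose j) * (-4) ^ j] (mod int p)" using Suc jn n_def by simp
  have e1: "int (Suc j) * int (2 * Suc j choose Suc j) = 2 * (2 * int j + 1) * int (2 * j choose j)"
    using c1[of j] by (metis (mono_tags, lifting) of_nat_1 of_nat_add of_nat_mult of_nat_numeral)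
  have e2: "int (Suc j) * (int (n choose Suc j) * (-4) ^ Suc j) = (-4) * (int n - int j) * (int (n choose j) * (-4) ^ j)"
  proof -
    have "int (Suc j * (n choose Suc j)) = int ((n - j) * (n choose j))" using c2 by metis
    then have "int (Suc j) * int (n choose Suc j) = (int n - int j) * int (n choose j)" using jn by (simp add: of_nat_diff algebra_simps)
    note h = this
    have "int (Suc j) * (int (n choose Suc j) * (-4) ^ Suc j) = (int (Suc j) * int (n choose Suc j)) * (-4) ^ Suc j"
      by (simp only: mult.assoc)
    also have "\<dots> = ((int n - int j) * int (n choose j)) * (-4) ^ Suc j" by (simp only: h)
    also have "\<dots> = (-4) * (int n - int j) * (int (n choose j) * (-4) ^ j)" by (simp only: power_Suc mult_ac)
    finally show ?thesis .
  qed
  have m: "[2 * (2 * int j + 1) = (-4) * (int n - int j)] (mod int p)"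
  proof -
    have "2 * (2 * int j + 1) - (-4) * (int n - int j) = 2 * int p" using p2 by simp
    then show ?thesis by (metis cong_iff_dvd_diff dvd_triv_right mult.commute)
  qed
  have "[int (Suc j) * int (2 * Suc j choose Suc j) = int (Suc j) * (int (n choose Suc j) * (-4) ^ Suc j)] (mod int p)"
    unfolding e1 e2 by (rule cong_mult[OF m IH])
  moreover have "coprime (int (Suc j)) (int p)"
  proof -
    have "\<not> p dvd Suc j" using jn p2 by (auto dest: dvd_imp_le)
    then have "coprime p (Suc j)" using pr prime_imp_coprime by blast
    then show ?thesis by (metis coprime_commute coprime_int_iff)
  qed
  ultimately show ?case using cong_mult_lcancel n_def by blast
qed

lemma frob_sum: assumes "\<And>i. zp p (g i)"
  shows "rc p (\<Sum>i\<le>p. of_nat (p choose i) * g i) (g 0 + g p)"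
proof -
  have p0: "p \<noteq> 0" using pr by auto
  have "rc p (\<Sum>i\<le>p. of_nat (p choose i) * g i) (\<Sum>i\<le>p. if i = 0 \<or> i = p then g i else 0)"
  proof (rule rc_sum[OF pr])
    fix i assume "i \<in> {..p}"
    show "rc p (of_nat (p choose i) * g i) (if i = 0 \<or> i = p then g i else 0)"
    proof (cases "i = 0 \<or> i = p")
      case True then show ?thesis using rc_refl[OF pr] by auto
    next
      case False
      then have "i < p" using \<open>i \<in> {..p}\<close> by auto
      then have "p dvd (p choose i)" using dvd_choose_prime False p0 pr by blast
      then obtain k where k: "p choose i = p * k" by blast
      have "(of_nat (p choose i) * g i - 0) / of_nat p = of_nat k * g i" using k p0 by simp
      then show ?thesis using False assms unfolding rc_def by (simp add: zp_mult[OF pr] zp_nat[OF pr])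
    qed
  qed
  moreover have "(\<Sum>i\<le>p. if i = 0 \<or> i = p then g i else 0) = g 0 + g p"
  proof -
    have "(\<Sum>i\<le>p. if i = 0 \<or> i = p then g i else 0) = sum g {i \<in> {..p}. i = 0 \<or> i = p}"
      by (simp add: sum.inter_filter[symmetric] atMost_def)
    also have "{i \<in> {..p}. i = 0 \<or> i = p} = {0, p}" by auto
    finally show ?thesis using p0 by simp
  qed
  ultimately show ?thesis by simp
qed

lemma zp_pw: "zp p a \<Longrightarrow> zp p b \<Longrightarrow> zp p d \<Longrightarrow> zp p (fst (pw d (a, b) N)) \<and> zp p (snd (pw d (a, b) N))"
  by (induction N) (auto simp: mul_def pr)

lemma pw_frob: assumes "zp p t" "zp p d"
  shows "rc p (fst (pw d (1, t) p)) 1" "rc p (snd (pw d (1, t) p)) (t ^ p * d ^ ((p - 1) div 2))"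
proof -
  have "fe d t 0 = 1" "fe d t p = 0" using odd by (auto simp: fe_def)
  moreover have "\<And>i. zp p (fe d t i)" "\<And>i. zp p (fo d t i)" using assms by (auto simp: fe_def fo_def pr)
  ultimately show "rc p (fst (pw d (1, t) p)) 1" using frob_sum[of "fe d t"] unfolding pw_formula by simp
  have "fo d t 0 = 0" "fo d t p = t ^ p * d ^ ((p - 1) div 2)" using odd by (auto simp: fo_def elim!: oddE)
  then show "rc p (snd (pw d (1, t) p)) (t ^ p * d ^ ((p - 1) div 2))"
    using frob_sum[of "fo d t"] \<open>\<And>i. zp p (fo d t i)\<close> unfolding pw_formula by simp
qed

lemma S_cong: assumes "zp p x" "t ^ 2 * d = 16 * x"
  shows "rc p (\<Sum>k = 0..p div 4. of_nat ((4*k) choose (2*k)) * x ^ k)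
             (fst (pw d (1, t) ((p - 1) div 2)))"
proof -
  define n where "n = (p - 1) div 2"
  have nd: "n div 2 = p div 4"
  proof -
    obtain q where q: "p = 2 * q + 1" using odd by (metis oddE)
    have "p div 4 = p div 2 div 2" by (metis div_mult2_eq num_double numeral_times_numeral)
    then show ?thesis using q unfolding n_def by simp
  qed
  have "rc p (\<Sum>k = 0..p div 4. of_nat ((4*k) choose (2*k)) * x ^ k)
             (\<Sum>k = 0..p div 4. of_nat (n choose (2 * k)) * (16 * x) ^ k)"
  proof (rule rc_sum[OF pr])
    fix k assume "k \<in> {0..p div 4}"
    then have "2 * k \<le> n" using nd by auto
    then have "[int (2 * (2 * k) choose (2 * k)) = int (n choose (2 * k)) * (-4) ^ (2 * k)] (mod int p)"
      using central_cong n_def by blast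
    then have "rc p (of_int (int (2 * (2 * k) choose (2 * k)))) (of_int (int (n choose (2 * k)) * (-4) ^ (2 * k)))"
      using rc_int[OF pr] by blast
    then have "rc p (of_nat ((4 * k) choose (2 * k))) (of_nat (n choose (2 * k)) * 16 ^ k)"
      by (simp add: power_mult)
    then have "rc p (of_nat ((4*k) choose (2*k)) * x ^ k) ((of_nat (n choose (2 * k)) * 16 ^ k) * x ^ k)"
      by (rule rc_mult[OF pr]) (use assms in \<open>simp_all add: zp_mult[OF pr] zp_pow[OF pr] zp_nat[OF pr] zp_numeral[OF pr] rc_refl[OF pr]\<close>)
    then show "rc p (of_nat ((4*k) choose (2*k)) * x ^ k) (of_nat (n choose (2 * k)) * (16 * x) ^ k)"
      by (simp add: power_mult_distrib mult.assoc)
  qed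
  also have "(\<Sum>k = 0..p div 4. of_nat (n choose (2 * k)) * (16 * x) ^ k) = fst (pw d (1, t) n)"
    unfolding pw_fst assms(2) nd by (simp add: atLeast0AtMost)
  finally show ?thesis unfolding n_def .
qed

end



lemma kv_alg: fixes m R Q W0 Y :: rat
  assumes "R \<noteq> 0" "Q \<noteq> 0" "1 + m \<noteq> 0" "m \<noteq> 0"
  shows "m * (W0 / (R * Q)) * ((m - 1) / (2 * m)) * (- ((m - 1) * W0) * ((1 + Y) / (1 + m)))
     = ((m - 1) * W0) * ((m - 1) * W0) * (1 / (-2 * R)) * ((1 + Y) * (1 / (Q * (1 + m))))"
proof -
  have "m * (W0 / (R * Q)) * ((m - 1) / (2 * m)) * (- ((m - 1) * W0) * ((1 + Y) / (1 + m)))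
     = - ((m - 1) * W0 * ((m - 1) * W0) * (1 + Y)) / (2 * R * Q * (1 + m))"
    using assms by (simp add: divide_simps)
  also have "\<dots> = ((m - 1) * W0) * ((m - 1) * W0) * (1 / (-2 * R)) * ((1 + Y) * (1 / (Q * (1 + m))))"
    using assms by (simp add: divide_simps)
  finally show ?thesis .
qed

context fixes p :: nat assumes pr: "prime p" and odd: "odd p"
begin

lemmas zpS = zp_int[OF pr] zp_nat[OF pr] zp_0[OF pr] zp_1[OF pr] zp_numeral[OF pr]
  zp_add[OF pr] zp_mult[OF pr] zp_uminus[OF pr] zp_diff[OF pr] zp_pow[OF pr]

lemma rc_trans'[trans]: "rc p x y \<Longrightarrow> rc p y z \<Longrightarrow> rc p x z" using rc_trans[OF pr] by blast

lemma p2: "2 < p" using prime_ge_2_nat[OF pr] odd by (cases "p = 2") auto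

lemma nz_pow2: "\<not> rc p (2 ^ k) 0"
proof -
  have "\<not> int p dvd 2 ^ k"
  proof
    assume "int p dvd 2 ^ k"
    then have "int p dvd 2" using pr_int[OF pr] prime_dvd_power by blast
    then have "p dvd 2" by (metis int_dvd_int_iff of_nat_numeral)
    then show False using dvd_imp_le[of p 2] p2 by simp
  qed
  then show ?thesis using nz_int[OF pr, of "2 ^ k"] by simp
qed

lemma zp_divide: "zp p x \<Longrightarrow> zp p y \<Longrightarrow> \<not> rc p y 0 \<Longrightarrow> zp p (x / y)"
  using zp_inv[OF pr, of y] zp_mult[OF pr, of x "1 / y"] by simp

lemma zp_divide2: "zp p x \<Longrightarrow> zp p (x / 2 ^ k)"
  using zp_divide[of x "2 ^ k"] nz_pow2 zpS by simp

lemma neg_nz: "\<not> rc p x 0 \<Longrightarrow> \<not> rc p (- x) 0"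
  using rc_uminus[OF pr, of "-x" 0] by auto

lemma minus4: assumes h: "4 dvd p - 1" shows "rc p ((-4) ^ ((p - 1) div 4)) 1"
proof -
  obtain q where q: "p = 4 * q + 1" "(p - 1) div 4 = q" 
  proof -
    obtain q where "p - 1 = 4 * q" using h by (auto elim!: dvdE)
    moreover have "p \<ge> 1" using p2 by simp
    ultimately show ?thesis using that[of q] by simp
  qed
  have w4: "pw (-1) (1, 1) 4 = (-4, 0)" by (simp add: numeral_eq_Suc mul_def)
  have "pw (-1) (1, 1) p = mul (-1) (pw (-1) (pw (-1) (1, 1) 4) q) (1, 1)" using q pw_pw[of "-1" "(1,1)" 4 q] by simp
  also have "\<dots> = ((-4) ^ q, (-4) ^ q)" unfolding w4 pw_real by (simp add: mul_def)
  finally show ?thesis using pw_frob(1)[OF pr odd, of 1 "-1"] zpS q by simp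
qed

lemma minus4b: assumes h: "4 dvd p - 3" shows "rc p (-2 * (-4) ^ ((p - 3) div 4)) 1"
proof -
  obtain q where q: "p = 4 * q + 3" "(p - 3) div 4 = q" 
  proof -
    obtain q where "p - 3 = 4 * q" using h by (auto elim!: dvdE)
    moreover have "p \<ge> 3" using p2 by simp
    ultimately show ?thesis using that[of q] by simp
  qed
  have w4: "pw (-1) (1, 1) 4 = (-4, 0)" by (simp add: numeral_eq_Suc mul_def)
  have w3: "pw (-1) (1, 1) 3 = (-2, 2)" by (simp add: numeral_eq_Suc mul_def)
  have "pw (-1) (1, 1) p = mul (-1) (pw (-1) (pw (-1) (1, 1) 4) q) (pw (-1) (1, 1) 3)"
    using q pw_pw[of "-1" "(1,1)" 4 q] pw_add[of "-1" "(1,1)" "4 * q" 3] by simp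
  also have "\<dots> = (-2 * (-4) ^ q, 2 * (-4) ^ q)" unfolding w4 w3 pw_real by (simp add: mul_def)
  finally show ?thesis using pw_frob(1)[OF pr odd, of 1 "-1"] zpS q by simp
qed

lemma main_rc:
  fixes m :: rat
  assumes zm: "zp p m" and m0: "\<not> rc p m 0" and m1: "\<not> rc p m 1" and mm1: "\<not> rc p m (-1)"
  shows "rc p (\<Sum>k = 0..p div 4. of_nat ((4*k) choose (2*k)) * (- m / (4 * (m - 1)^2))^k)
            (1 / (m + 1) * of_int (rLegendre (m - 1) p)
               * (m * of_int (rLegendre m p) + of_int (Legendre (-1) (int p))))
         \<and> (4 dvd p - 1 \<longrightarrow>
           rc p (\<Sum>k = 0..p div 4. of_nat ((4*k) choose (2*k)) * (- ((m - 1)^2) / (64 * m))^k)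
             (1 / (m + 1) * (m + of_int (rLegendre m p)) * m ^ ((p - 1) div 4)))
         \<and> (4 dvd p - 3 \<longrightarrow>
           rc p (\<Sum>k = 0..p div 4. of_nat ((4*k) choose (2*k)) * (- ((m - 1)^2) / (64 * m))^k)
             (1 / (m + 1) * (of_int (rLegendre m p) + 1) * m ^ ((p + 1) div 4)))"
proof -
  note zs = zpS
  define n where "n = (p - 1) div 2"
  have pn: "p = 2 * n + 1" "p - 1 = n + n" using odd n_def by presburger+
  have mne0: "m \<noteq> 0" using m0 rc_refl[OF pr] by blast
  have mne1: "m \<noteq> 1" using m1 rc_refl[OF pr] by blast
  have mnem1: "m \<noteq> -1" using mm1 rc_refl[OF pr] by blast
  have m1': "\<not> rc p (m - 1) 0" using m1 unfolding rc_def by simp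
  have m1'': "\<not> rc p (1 - m) 0" using neg_nz[OF m1'] by simp
  have mp1: "\<not> rc p (1 + m) 0" using mm1 unfolding rc_def by (simp add: add.commute)
  have mp1': "\<not> rc p (m + 1) 0" using mp1 by (simp add: add.commute)
  have zi: "zp p (1 / m)" "zp p (1 / (m - 1))" "zp p (1 / (1 - m))" "zp p (1 / (1 + m))" "zp p (1 / (m + 1))"
    using zp_inv[OF pr] zm m0 m1' m1'' mp1 mp1' zs by auto
  have zdm: "\<And>x. zp p x \<Longrightarrow> zp p (x / m)" using zp_divide[OF _ zm m0] by simp
  have fm: "rc p (m ^ (p - 1)) 1" using rc_fermat[OF pr p2 zm m0] .
  have fm1: "rc p ((m - 1) ^ (p - 1)) 1" using rc_fermat[OF pr p2 _ m1'] zm zs by simp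
  have fm2: "rc p ((1 - m) ^ (p - 1)) 1" using rc_fermat[OF pr p2 _ m1''] zm zs by simp
  have em: "rc p (of_int (rLegendre m p)) (m ^ n)" using rc_euler[OF pr p2 zm m0] n_def by simp
  have em1: "rc p (of_int (rLegendre (m - 1) p)) ((m - 1) ^ n)" using rc_euler[OF pr p2 _ m1'] zm zs n_def by simp
  have rl1: "rLegendre (-1) p = Legendre (-1) (int p)"
    unfolding rLegendre_def using quotient_of_int[of "-1"] by simp
  have "\<not> rc p (-1) 0" using neg_nz[of 1] nz_int[OF pr, of 1] p2 by simp
  then have eneg: "rc p (of_int (Legendre (-1) (int p))) ((-1) ^ n)"
    using rc_euler[OF pr p2, of "-1"] zs n_def rl1 by simp
  define d where "d = - m"
  define A where "A = fst (pw d (1, -1) (p - 1))"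
  define B where "B = snd (pw d (1, -1) (p - 1))"
  have zA: "zp p A" and zB: "zp p B" using zp_pw[OF pr odd, of 1 "-1" d "p - 1"] zs zm unfolding A_def B_def d_def by auto
  have "pw d (1, -1) p = pw d (1, -1) (Suc (p - 1))" using p2 by simp
  also have "\<dots> = mul d (A, B) (1, -1)" unfolding A_def B_def by simp
  finally have "pw d (1, -1) p = mul d (A, B) (1, -1)" .
  then have pwp: "pw d (1, -1) p = (A + m * B, B - A)" unfolding mul_def d_def by simp
  have F1: "rc p (A + m * B) 1" using pw_frob(1)[OF pr odd, of "-1" d] pwp zs zm unfolding d_def by simp
  have F2: "rc p (B - A) (- ((- m) ^ n))"
    using pw_frob(2)[OF pr odd, of "-1" d] pwp zs zm odd unfolding d_def n_def by simp
  have GA: "rc p (A * (1 + m)) (1 + m * (- m) ^ n)"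
  proof -
    have "rc p ((A + m * B) - m * (B - A)) (1 - m * (- ((- m) ^ n)))"
      by (intro rc_diff[OF pr] F1 rc_multl[OF pr] F2) (use zm zs in simp_all)
    then show ?thesis by (simp add: algebra_simps)
  qed
  have GB: "rc p (B * (1 + m)) (1 - (- m) ^ n)"
  proof -
    have "rc p ((A + m * B) + (B - A)) (1 + (- ((- m) ^ n)))"
      by (intro rc_add[OF pr] F1 F2)
    then show ?thesis by (simp add: algebra_simps)
  qed
  have Aeq: "rc p A ((1 + m * (- m) ^ n) / (1 + m))"
    using rc_div[OF pr GA zA] zs zm mp1 by simp
  have Beq: "rc p B ((1 - (- m) ^ n) / (1 + m))"
    using rc_div[OF pr GB zB] zs zm mp1 by simp
  define c where "c = 1 / (1 - m)"
  have zc: "zp p c" using zi c_def by simp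
  have cn: "rc p (c ^ n) ((1 - m) ^ n)"
  proof -
    have "rc p (c ^ n * (1 - m) ^ (p - 1)) (c ^ n * 1)"
      by (rule rc_multl[OF pr fm2]) (use zc zs in simp_all)
    moreover have "c ^ n * (1 - m) ^ (p - 1) = (1 - m) ^ n"
      using mne1 unfolding c_def pn(2) power_add by (simp add: power_one_over field_simps)
    ultimately show ?thesis by (simp add: rc_sym[OF pr])
  qed
  define V where "V = (1 - m) ^ n * ((1 + m * (- m) ^ n) / (1 + m))"
  define VB where "VB = (1 - m) ^ n * ((1 - (- m) ^ n) / (1 + m))"
  have zdiv: "\<And>x. zp p x \<Longrightarrow> zp p (x / (1 + m))" using zp_divide[OF _ _ mp1] zs zm by simp
  have zdiv': "\<And>x. zp p x \<Longrightarrow> zp p (x / (m + 1))" using zp_divide[OF _ _ mp1'] zs zm by simp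
  have q1: "zp p ((1 + m * (-m)^n)/(1+m))" "zp p ((1 - (-m)^n)/(1+m))" by (rule zdiv; simp add: zs zm)+
  have zV: "zp p V" "zp p VB" unfolding V_def VB_def by (rule zs(7)[OF _ q1(1)] zs(7)[OF _ q1(2)]; simp add: zs zm)+
  have cA: "rc p (c ^ n * A) V" unfolding V_def
    by (rule rc_mult[OF pr cn Aeq _ q1(1)]) (simp add: zs zm)
  have cB: "rc p (c ^ n * B) VB" unfolding VB_def
    by (rule rc_mult[OF pr cn Beq _ q1(2)]) (simp add: zs zm)
  define t where "t = 2 / (m - 1)"
  have pw1t: "pw d (1, t) n = (c ^ n * A, c ^ n * B)"
  proof -
    have h1: "(1, t) = (c * (1 - m), c * (-2))" unfolding c_def t_def using mne1 by (auto simp: field_simps)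
    have h2: "(1 - m, -2) = mul d (1, -1) (1, -1)" unfolding mul_def d_def by simp
    have h3: "pw d (mul d (1, -1) (1, -1)) n = pw d (1, -1) (p - 1)"
      unfolding pn(2) by (simp add: pw_mul pw_add[symmetric])
    have "pw d (1, t) n = (c ^ n * fst (pw d (1 - m, -2) n), c ^ n * snd (pw d (1 - m, -2) n))"
      unfolding h1 by (rule pw_scale)
    then show ?thesis unfolding h2 h3 A_def B_def .
  qed
  have P1: "rc p (\<Sum>k = 0..p div 4. of_nat ((4*k) choose (2*k)) * (- m / (4 * (m - 1)^2))^k) V"
  proof -
    have "- m / (4 * (m - 1)^2) = (- m * (1 / (m - 1)) ^ 2) / 2 ^ 2" using mne1 by (simp add: field_simps)
    moreover have "zp p ((- m * (1 / (m - 1)) ^ 2) / 2 ^ 2)" by (rule zp_divide2) (simp add: zs zm zi)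
    ultimately have "zp p (- m / (4 * (m - 1)^2))" by metis
    moreover have "t ^ 2 * d = 16 * (- m / (4 * (m - 1)^2))"
    proof -
      have "(m - 1) ^ 2 \<noteq> 0" using mne1 by simp
      then show ?thesis unfolding t_def d_def by (simp add: power_divide field_simps)
    qed
    ultimately have "rc p (\<Sum>k = 0..p div 4. of_nat ((4*k) choose (2*k)) * (- m / (4 * (m - 1)^2))^k) (fst (pw d (1, t) n))"
      using S_cong[OF pr odd] n_def by blast
    then show ?thesis using pw1t cA by (simp add: rc_trans')
  qed
  define e :: rat where "e = (-1) ^ n"
  have ee: "e * e = 1" unfolding e_def by (simp add: power_mult_distrib[symmetric])
  have e1: "(1 - m) ^ n = e * (m - 1) ^ n" unfolding e_def by (simp add: power_mult_distrib[symmetric])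
  have e2: "(- m) ^ n = e * m ^ n" unfolding e_def by (simp add: power_mult_distrib[symmetric])
  have mp0: "1 + m \<noteq> 0" "m + 1 \<noteq> 0" using mnem1 by (auto simp: add_eq_0_iff)
  have part1: "rc p (\<Sum>k = 0..p div 4. of_nat ((4*k) choose (2*k)) * (- m / (4 * (m - 1)^2))^k)
            (1 / (m + 1) * of_int (rLegendre (m - 1) p)
               * (m * of_int (rLegendre m p) + of_int (Legendre (-1) (int p))))"
  proof -
    have r1: "rc p (1 / (m + 1) * of_int (rLegendre (m - 1) p)) (1 / (m + 1) * (m - 1) ^ n)"
      by (rule rc_multl[OF pr em1]) (simp_all add: zs zm zi zdiv zdiv')
    have r2: "rc p (m * of_int (rLegendre m p) + of_int (Legendre (-1) (int p))) (m * m ^ n + (-1) ^ n)"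
      by (intro rc_add[OF pr] rc_multl[OF pr em] eneg) (simp_all add: zs zm zdiv zdiv')
    have r3: "rc p (1 / (m + 1) * of_int (rLegendre (m - 1) p) * (m * of_int (rLegendre m p) + of_int (Legendre (-1) (int p))))
       (1 / (m + 1) * (m - 1) ^ n * (m * m ^ n + (-1) ^ n))"
      by (rule rc_mult[OF pr r1 r2]) (simp_all add: zs zm zi zdiv zdiv')
    have k: "e * (1 + m * (e * m ^ n)) = m * m ^ n + e"
    proof -
      have "e * (1 + m * (e * m ^ n)) = e + (e * e) * (m * m ^ n)" by (simp only: distrib_left mult_1_right mult_ac)
      then show ?thesis using ee by simp
    qed
    have Veq: "V = 1 / (m + 1) * (m - 1) ^ n * (m * m ^ n + (-1) ^ n)"
    proof -
      have "V = (m - 1) ^ n * (e * (1 + m * (e * m ^ n))) / (1 + m)" unfolding V_def e1 e2 by (simp add: mult_ac)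
      also have "\<dots> = (m - 1) ^ n * (m * m ^ n + e) / (1 + m)" unfolding k ..
      also have "\<dots> = 1 / (m + 1) * (m - 1) ^ n * (m * m ^ n + (-1) ^ n)" unfolding e_def by (simp add: add.commute)
      finally show ?thesis .
    qed
    show ?thesis using rc_trans'[OF P1[unfolded Veq] rc_sym[OF pr r3]] .
  qed
  define x2 where "x2 = - ((m - 1)^2) / (64 * m)"
  define t2 where "t2 = (m - 1) / (2 * m)"
  have zx2: "zp p x2"
  proof -
    have xe: "x2 = (- ((m - 1) ^ 2) * (1 / m)) / 2 ^ 6" unfolding x2_def using mne0 by (simp add: field_simps)
    have "zp p ((- ((m - 1) ^ 2) * (1 / m)) / 2 ^ 6)" by (rule zp_divide2) (simp add: zs zm zi zdm)
    then show ?thesis using xe by metis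
  qed
  have t2d: "t2 ^ 2 * d = 16 * x2" unfolding t2_def d_def x2_def using mne0 by (simp add: power_divide field_simps power2_eq_square)
  have S2: "rc p (\<Sum>k = 0..p div 4. of_nat ((4*k) choose (2*k)) * x2 ^ k) (fst (pw d (1, t2) n))"
    using S_cong[OF pr odd zx2 t2d] n_def by simp
  have pwc: "pw d (1, - t) n = (c ^ n * A, - (c ^ n * B))" using pw_conj[of d 1 t n] pw1t by simp
  have split: "(1, t2) = mul d (0, t2) (1, - t)" unfolding mul_def d_def t2_def t_def using mne0 mne1 by (simp add: field_simps)
  have pwt2: "pw d (1, t2) n = mul d (pw d (0, t2) n) (c ^ n * A, - (c ^ n * B))"
    unfolding split pw_mul pwc ..
  have zt2: "zp p t2"
  proof -
    have "t2 = ((m - 1) * (1 / m)) / 2 ^ 1" unfolding t2_def by simp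
    moreover have "zp p (((m - 1) * (1 / m)) / 2 ^ 1)" by (rule zp_divide2) (simp add: zs zm zi zdm)
    ultimately show ?thesis by metis
  qed
  define k0 where "k0 = d * t2 * t2"
  have zk0: "zp p k0" unfolding k0_def d_def using zt2 zm zs by simp
  have k0e: "k0 = (m - 1) ^ 2 / (-4 * m)" unfolding k0_def d_def t2_def using mne0 by (simp add: field_simps power2_eq_square)
  have pw0: "pw d (0, t2) (2 * j) = (k0 ^ j, 0)" for j
  proof -
    have "pw d (0, t2) 2 = (k0, 0)" unfolding k0_def by (simp add: numeral_eq_Suc mul_def)
    then show ?thesis using pw_pw[of d "(0, t2)" 2 j] pw_real by simp
  qed
  have k0p: "k0 ^ j = (m - 1) ^ (2 * j) / ((-4) ^ j * m ^ j)" for j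
    unfolding k0e power_divide power_mult_distrib power_mult ..
  have nzR: "(-4::rat) ^ j \<noteq> 0" "m ^ j \<noteq> 0" for j using mne0 by auto
  have Y2: "rc p (m ^ n * m ^ n) 1" using fm unfolding pn(2) power_add .
  have X2: "rc p ((m - 1) ^ n * (m - 1) ^ n) 1" using fm1 unfolding pn(2) power_add .
  have zm1: "zp p (1 / m ^ j)" for j using zi zs by (simp add: power_one_over[symmetric])
  have part2: "rc p (\<Sum>k = 0..p div 4. of_nat ((4*k) choose (2*k)) * (- ((m - 1)^2) / (64 * m))^k)
             (1 / (m + 1) * (m + of_int (rLegendre m p)) * m ^ ((p - 1) div 4))" if h4: "4 dvd p - 1"
  proof -
    define q where "q = (p - 1) div 4"
    have nq: "n = 2 * q" using h4 unfolding q_def n_def by (auto elim!: dvdE)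
    have ev: "e = 1" unfolding e_def nq by (simp add: power_mult)
    define X where "X = (m - 1) ^ n"
    define Y where "Y = m ^ n"
    define Q where "Q = m ^ q"
    define R :: rat where "R = (-4) ^ q"
    have YQ: "Y = Q * Q" unfolding Y_def Q_def nq by (simp only: mult_2 power_add)
    have "fst (pw d (1, t2) n) = k0 ^ q * (c ^ n * A)" unfolding pwt2 using pw0[of q] nq by (simp add: mul_def)
    note S2' = S2[unfolded this]
    have s1: "rc p (\<Sum>k = 0..p div 4. of_nat ((4*k) choose (2*k)) * x2 ^ k) (k0 ^ q * V)"
      by (rule rc_trans'[OF S2' rc_multl[OF pr cA]]) (use zV zk0 in \<open>simp_all add: zs\<close>)
    define Z where "Z = 1 / (Q * (1 + m))"
    have zZ: "zp p Z"
    proof -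
      have "Z = (1 / m ^ q) * (1 / (1 + m))" unfolding Z_def Q_def by simp
      then show ?thesis using zm1 zi zs by metis
    qed
    have zX: "zp p X" "zp p Y" "zp p Q" unfolding X_def Y_def Q_def using zm zs by simp_all
    have kv: "k0 ^ q * V = (X * X * (1 / R)) * ((1 + m * Y) * Z)"
    proof -
      have a1: "k0 ^ q = X / (R * Q)" unfolding k0p X_def R_def Q_def nq ..
      have a2: "V = X * ((1 + m * Y) / (1 + m))" unfolding V_def e1 e2 ev X_def Y_def by simp
      show ?thesis unfolding a1 a2 Z_def using nzR[of q] mp0 unfolding R_def Q_def by (simp add: field_simps)
    qed
    have m4: "rc p R 1" using minus4[OF h4] unfolding R_def q_def .
    have zR: "zp p R" unfolding R_def using zs by simp
    have g: "rc p (X * X * (1 / R)) (1 * 1)"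
      by (rule rc_mult[OF pr X2[folded X_def] rc_one_inv[OF pr m4 zR]]) (simp_all add: zs)
    have g2: "rc p ((X * X * (1 / R)) * ((1 + m * Y) * Z)) ((1 * 1) * ((1 + m * Y) * Z))"
      by (rule rc_mult[OF pr g rc_refl[OF pr]]) (use zZ zX zm in \<open>simp_all add: zs\<close>)
    have g3: "rc p ((1 + m * Y) * Z) ((Y * Y + m * Y) * Z)"
      by (rule rc_mult[OF pr rc_add[OF pr rc_sym[OF pr Y2[folded Y_def]] rc_refl[OF pr]] rc_refl[OF pr]])
        (use zZ zX zm in \<open>simp_all add: zs\<close>)
    have g4: "(Y * Y + m * Y) * Z = 1 / (m + 1) * (m + Y) * Q"
    proof -
      have nzQ: "Q \<noteq> 0" unfolding Q_def using mne0 by simp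
      have "Q + Q * m \<noteq> 0" using nzQ mp0 by (metis distrib_left mult_1_right mult_eq_0_iff)
      then show ?thesis unfolding Z_def YQ using mp0 nzQ by (simp add: field_simps)
    qed
    have g5: "rc p (1 / (m + 1) * (m + of_int (rLegendre m p)) * m ^ ((p - 1) div 4)) (1 / (m + 1) * (m + Y) * Q)"
      unfolding Q_def q_def[symmetric]
      by (rule rc_mult[OF pr rc_multl[OF pr rc_add[OF pr rc_refl[OF pr] em[folded Y_def]]] rc_refl[OF pr]])
        (use zX zm zi zdiv' in \<open>simp_all add: zs Q_def\<close>)
    have "rc p (\<Sum>k = 0..p div 4. of_nat ((4*k) choose (2*k)) * x2 ^ k) (1 / (m + 1) * (m + Y) * Q)"
      using rc_trans'[OF rc_trans'[OF s1[unfolded kv] g2[unfolded mult_1_left]] g3] g4 by simp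
    then show ?thesis using rc_sym[OF pr g5] rc_trans' unfolding x2_def by blast
  qed
  have part3: "rc p (\<Sum>k = 0..p div 4. of_nat ((4*k) choose (2*k)) * (- ((m - 1)^2) / (64 * m))^k)
             (1 / (m + 1) * (of_int (rLegendre m p) + 1) * m ^ ((p + 1) div 4))" if h4: "4 dvd p - 3"
  proof -
    define q where "q = (p - 3) div 4"
    obtain r where r: "p = 4 * r + 3"
    proof -
      obtain r where "p - 3 = 4 * r" using h4 by (auto elim!: dvdE)
      then show ?thesis using that[of r] p2 by simp
    qed
    have nq: "n = Suc (2 * q)" and pq: "(p + 1) div 4 = Suc q" unfolding n_def q_def r by simp_all
    have ev: "e = -1" unfolding e_def nq by simp
    define X where "X = (m - 1) ^ n"
    define Y where "Y = m ^ n"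
    define Q where "Q = m ^ q"
    define R :: rat where "R = (-4) ^ q"
    have nzQ: "Q \<noteq> 0" unfolding Q_def using mne0 by simp
    have nzQ': "Q + Q * m \<noteq> 0" using nzQ mp0 by (metis distrib_left mult_1_right mult_eq_0_iff)
    have nzR': "R \<noteq> 0" unfolding R_def by simp
    have YQ: "Y = Q * Q * m" unfolding Y_def Q_def nq power_Suc mult_2 power_add by (simp only: mult_ac)
    have "fst (pw d (1, t2) n) = (m * k0 ^ q * t2) * (c ^ n * B)"
      unfolding pwt2 using pw0[of q] nq by (simp add: mul_def d_def)
    note S2' = S2[unfolded this]
    have s1: "rc p (\<Sum>k = 0..p div 4. of_nat ((4*k) choose (2*k)) * x2 ^ k) ((m * k0 ^ q * t2) * VB)"
      by (rule rc_trans'[OF S2' rc_multl[OF pr cB]]) (use zV zk0 zt2 zm in \<open>simp_all add: zs\<close>)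
    define Z where "Z = 1 / (Q * (1 + m))"
    have zZ: "zp p Z"
    proof -
      have "Z = (1 / m ^ q) * (1 / (1 + m))" unfolding Z_def Q_def by simp
      then show ?thesis using zm1 zi zs by metis
    qed
    have zX: "zp p X" "zp p Y" "zp p Q" unfolding X_def Y_def Q_def using zm zs by simp_all
    have kv: "(m * k0 ^ q * t2) * VB = (X * X * (1 / (-2 * R))) * ((1 + Y) * Z)"
    proof -
      define W0 where "W0 = (m - 1) ^ (2 * q)"
      have a0: "X = (m - 1) * W0" unfolding X_def W0_def nq by simp
      have a1: "k0 ^ q = W0 / (R * Q)" unfolding k0p W0_def R_def Q_def ..
      have a2: "VB = - X * ((1 + Y) / (1 + m))" unfolding VB_def e1 e2 ev X_def Y_def by simp
      show ?thesis unfolding a1 a2 Z_def a0 t2_def by (rule kv_alg[OF nzR' nzQ mp0(1) mne0])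
    qed
    have m4: "rc p (-2 * R) 1" using minus4b[OF h4] unfolding R_def q_def .
    have zR: "zp p (-2 * R)" unfolding R_def using zs by simp
    have g: "rc p (X * X * (1 / (-2 * R))) (1 * 1)"
      by (rule rc_mult[OF pr X2[folded X_def] rc_one_inv[OF pr m4 zR]]) (simp_all add: zs)
    have g2: "rc p ((X * X * (1 / (-2 * R))) * ((1 + Y) * Z)) ((1 * 1) * ((1 + Y) * Z))"
      by (rule rc_mult[OF pr g rc_refl[OF pr]]) (use zZ zX zm in \<open>simp_all add: zs\<close>)
    have g3: "rc p ((1 + Y) * Z) ((Y * Y + Y) * Z)"
      by (rule rc_mult[OF pr rc_add[OF pr rc_sym[OF pr Y2[folded Y_def]] rc_refl[OF pr]] rc_refl[OF pr]])
        (use zZ zX zm in \<open>simp_all add: zs\<close>)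
    have g4: "(Y * Y + Y) * Z = 1 / (m + 1) * (Y + 1) * (m * Q)"
      unfolding Z_def YQ using mp0 nzQ nzQ' by (simp add: field_simps)
    have mq: "m ^ ((p + 1) div 4) = m * Q" unfolding pq Q_def by simp
    have g5: "rc p (1 / (m + 1) * (of_int (rLegendre m p) + 1) * m ^ ((p + 1) div 4)) (1 / (m + 1) * (Y + 1) * (m * Q))"
      unfolding mq
      by (rule rc_mult[OF pr rc_multl[OF pr rc_add[OF pr em[folded Y_def] rc_refl[OF pr]]] rc_refl[OF pr]])
        (use zX zm zi zdiv' in \<open>simp_all add: zs\<close>)
    have "rc p (\<Sum>k = 0..p div 4. of_nat ((4*k) choose (2*k)) * x2 ^ k) (1 / (m + 1) * (Y + 1) * (m * Q))"
      using rc_trans'[OF rc_trans'[OF s1[unfolded kv] g2[unfolded mult_1_left]] g3] g4 by simp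
    then show ?thesis using rc_sym[OF pr g5] rc_trans' unfolding x2_def by blast
  qed
  show ?thesis using part1 part2 part3 by blast
qed

end

theorem corollary2p10:
  fixes p :: nat and m :: rat
  assumes "prime p" and "odd p"
    and "in_Zp p m"
    and "\<not> ratcong_mod p m 0" and "\<not> ratcong_mod p m 1" and "\<not> ratcong_mod p m (-1)"
  shows "ratcong_mod p (\<Sum>k = 0..p div 4. of_nat ((4*k) choose (2*k)) * (- m / (4 * (m - 1)^2))^k)
            (1 / (m + 1) * of_int (rLegendre (m - 1) p)
               * (m * of_int (rLegendre m p) + of_int (Legendre (-1) (int p))))
         \<and> (4 dvd p - 1 \<longrightarrow>
           ratcong_mod p (\<Sum>k = 0..p div 4. of_nat ((4*k) choose (2*k)) * (- ((m - 1)^2) / (64 * m))^k)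
             (1 / (m + 1) * (m + of_int (rLegendre m p)) * m ^ ((p - 1) div 4)))
         \<and> (4 dvd p - 3 \<longrightarrow>
           ratcong_mod p (\<Sum>k = 0..p div 4. of_nat ((4*k) choose (2*k)) * (- ((m - 1)^2) / (64 * m))^k)
             (1 / (m + 1) * (of_int (rLegendre m p) + 1) * m ^ ((p + 1) div 4)))"
proof -
  have zm: "zp p m" using assms(3) in_Zp_iff[OF assms(1)] by simp
  show ?thesis unfolding ratcong_iff[OF assms(1)]
    by (rule main_rc[OF assms(1) assms(2) zm]) (use assms(4-6) ratcong_iff[OF assms(1)] in simp_all)
qed

end
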